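(* Consider the dynamic panel logit AR(1) model with $T=3$: binary outcomes $Y_0,Y_1,Y_2,Y_3\in\{0,1\}$, regressors $X=(X_1,X_2,X_3)\in\mathbb{R}^{K\times 3}$ and a scalar fixed effect $A\in\mathbb{R}$ such that, for $t\in\{1,2,3\}$, $$\Pr(Y_t=1\mid Y_0,\dots,Y_{t-1},X,A)=\frac{\exp(X_t'\beta_0+Y_{t-1}\gamma_0+A)}{1+\exp(X_t'\beta_0+Y_{t-1}\gamma_0+A)},$$ with true parameters $\beta_0\in\mathbb{R}^K$, $\gamma_0\in\mathbb{R}$. Write $x_{ts}=x_t-x_s$ and $y=(y_1,y_2,y_3)$. Define $$m_0^{(a)}(y,x,\beta,\gamma)=\begin{cases}\exp(x_{12}'\beta)&y=(0,1,0),\\ \exp(x_{13}'\beta-\gamma)&y=(0,1,1),\\ -1&(y_1,y_2)=(1,0),\\ \exp(x_{32}'\beta)-1&y=(1,1,0),\\0&\text{otherwise},\end{cases}\qquad m_0^{(b)}(y,x,\beta,\gamma)=\begin{cases}\exp(x_{23}'\beta)-1&y=(0,0,1),\\ -1&(y_1,y_2)=(0,1),\\ \exp(x_{31}'\beta)&y=(1,0,0),\\ \exp(\gamma+x_{21}'\beta)&y=(1,0,1),\\0&\text{otherwise},\end{cases}$$ $$m_1^{(a)}(y,x,\beta,\gamma)=\begin{cases}\exp(x_{12}'\beta+\gamma)&y=(0,1,0),\\ \exp(x_{13}'\beta)&y=(0,1,1),\\ -1&(y_1,y_2)=(1,0),\\ \exp(x_{32}'\beta)-1&y=(1,1,0),\\0&\text{otherwise},\end{cases}\qquad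 m_1^{(b)}(y,x,\beta,\gamma)=\begin{cases}\exp(x_{23}'\beta)-1&y=(0,0,1),\\ -1&(y_1,y_2)=(0,1),\\ \exp(x_{31}'\beta-\gamma)&y=(1,0,0),\\ \exp(x_{21}'\beta)&y=(1,0,1),\\0&\text{otherwise}.\end{cases}$$ Then for all $y_0\in\{0,1\}$, $x\in\mathbb{R}^{K\times 3}$ and $\alpha\in\mathbb{R}$, $$\mathbb{E}\big[m^{(a)}_{y_0}(Y,X,\beta_0,\gamma_0)\mid Y_0=y_0,X=x,A=\alpha\big]=0,\qquad \mathbb{E}\big[m^{(b)}_{y_0}(Y,X,\beta_0,\gamma_0)\mid Y_0=y_0,X=x,A=\alpha\big]=0,$$ where $Y=(Y_1,Y_2,Y_3)$.
   Context: The joint distribution of $(X,A)$ (and of $Y_0$) is unrestricted; only the conditional law of $(Y_1,Y_2,Y_3)$ given $(Y_0,X,A)$ is specified by the logit model above. The conditional expectation is thus $\sum_{y\in\{0,1\}^3}\prod_{t=1}^3\frac{1}{1+\exp[(1-2y_t)(x_t'\beta_0+y_{t-1}\gamma_0+\alpha)]}\,m_{y_0}(y,x,\beta_0,\gamma_0)$. *)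

theory Defs
  imports "HOL-Analysis.Analysis"
begin

text \<open>Dynamic panel logit AR(1), T = 3. Outcomes are naturals in {0,1};
  regressors x t (t = 1,2,3) are vectors in R^K, modelled as real^'k;
  x_t' beta is the inner product x t \<bullet> beta.\<close>

definition logit_prob :: "real \<Rightarrow> nat \<Rightarrow> real" where
  "logit_prob z yt = 1 / (1 + exp ((1 - 2 * real yt) * z))"

definition path_prob ::
  "real^'k \<Rightarrow> real \<Rightarrow> real \<Rightarrow> (nat \<Rightarrow> real^'k) \<Rightarrow> nat \<Rightarrow> nat \<Rightarrow> nat \<Rightarrow> nat \<Rightarrow> real" where
  "path_prob b g a x y0 y1 y2 y3 =
     logit_prob (x 1 \<bullet> b + real y0 * g + a) y1 *
     logit_prob (x 2 \<bullet> b + real y1 * g + a) y2 *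
     logit_prob (x 3 \<bullet> b + real y2 * g + a) y3"

definition cond_exp ::
  "(nat \<Rightarrow> nat \<Rightarrow> nat \<Rightarrow> (nat \<Rightarrow> real^'k) \<Rightarrow> real^'k \<Rightarrow> real \<Rightarrow> real)
   \<Rightarrow> real^'k \<Rightarrow> real \<Rightarrow> real \<Rightarrow> (nat \<Rightarrow> real^'k) \<Rightarrow> nat \<Rightarrow> real" where
  "cond_exp m b g a x y0 =
     (\<Sum>y1\<in>{0,1}. \<Sum>y2\<in>{0,1}. \<Sum>y3\<in>{0,1}.
        path_prob b g a x y0 y1 y2 y3 * m y1 y2 y3 x b g)"

definition m0a :: "nat \<Rightarrow> nat \<Rightarrow> nat \<Rightarrow> (nat \<Rightarrow> real^'k) \<Rightarrow> real^'k \<Rightarrow> real \<Rightarrow> real" where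
  "m0a y1 y2 y3 x b g =
     (if (y1, y2, y3) = (0, 1, 0) then exp ((x 1 - x 2) \<bullet> b)
      else if (y1, y2, y3) = (0, 1, 1) then exp ((x 1 - x 3) \<bullet> b - g)
      else if (y1, y2) = (1, 0) then -1
      else if (y1, y2, y3) = (1, 1, 0) then exp ((x 3 - x 2) \<bullet> b) - 1
      else 0)"

definition m0b :: "nat \<Rightarrow> nat \<Rightarrow> nat \<Rightarrow> (nat \<Rightarrow> real^'k) \<Rightarrow> real^'k \<Rightarrow> real \<Rightarrow> real" where
  "m0b y1 y2 y3 x b g =
     (if (y1, y2, y3) = (0, 0, 1) then exp ((x 2 - x 3) \<bullet> b) - 1
      else if (y1, y2) = (0, 1) then -1
      else if (y1, y2, y3) = (1, 0, 0) then exp ((x 3 - x 1) \<bullet> b)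
      else if (y1, y2, y3) = (1, 0, 1) then exp (g + (x 2 - x 1) \<bullet> b)
      else 0)"

definition m1a :: "nat \<Rightarrow> nat \<Rightarrow> nat \<Rightarrow> (nat \<Rightarrow> real^'k) \<Rightarrow> real^'k \<Rightarrow> real \<Rightarrow> real" where
  "m1a y1 y2 y3 x b g =
     (if (y1, y2, y3) = (0, 1, 0) then exp ((x 1 - x 2) \<bullet> b + g)
      else if (y1, y2, y3) = (0, 1, 1) then exp ((x 1 - x 3) \<bullet> b)
      else if (y1, y2) = (1, 0) then -1
      else if (y1, y2, y3) = (1, 1, 0) then exp ((x 3 - x 2) \<bullet> b) - 1
      else 0)"

definition m1b :: "nat \<Rightarrow> nat \<Rightarrow> nat \<Rightarrow> (nat \<Rightarrow> real^'k) \<Rightarrow> real^'k \<Rightarrow> real \<Rightarrow> real" where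
  "m1b y1 y2 y3 x b g =
     (if (y1, y2, y3) = (0, 0, 1) then exp ((x 2 - x 3) \<bullet> b) - 1
      else if (y1, y2) = (0, 1) then -1
      else if (y1, y2, y3) = (1, 0, 0) then exp ((x 3 - x 1) \<bullet> b - g)
      else if (y1, y2, y3) = (1, 0, 1) then exp ((x 2 - x 1) \<bullet> b)
      else 0)"

definition ma :: "nat \<Rightarrow> nat \<Rightarrow> nat \<Rightarrow> nat \<Rightarrow> (nat \<Rightarrow> real^'k) \<Rightarrow> real^'k \<Rightarrow> real \<Rightarrow> real" where
  "ma y0 = (if y0 = 0 then m0a else m1a)"

definition mb :: "nat \<Rightarrow> nat \<Rightarrow> nat \<Rightarrow> nat \<Rightarrow> (nat \<Rightarrow> real^'k) \<Rightarrow> real^'k \<Rightarrow> real \<Rightarrow> real" where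
  "mb y0 = (if y0 = 0 then m0b else m1b)"

end

theory Submission
  imports Defs
begin

lemma lp0: "logit_prob z 0 = 1 / (1 + exp z)" by (simp add: logit_prob_def)
lemma lp1: "logit_prob z (Suc 0) = exp z / (1 + exp z)"
  by (simp add: logit_prob_def exp_minus field_simps)

lemma key:
  fixes u1 u2 u3 G :: real
  assumes "u1 > 0" "u2 > 0" "u3 > 0" "G > 0" and y0: "y0 \<in> {0,1}"
  shows
  "(\<Sum>y1\<in>{0::nat,1}. \<Sum>y2\<in>{0::nat,1}. \<Sum>y3\<in>{0::nat,1}.
     (if y1 = 0 then 1/(1+u1*G^y0) else u1*G^y0/(1+u1*G^y0)) *
     (if y2 = 0 then 1/(1+u2*G^y1) else u2*G^y1/(1+u2*G^y1)) *
     (if y3 = 0 then 1/(1+u3*G^y2) else u3*G^y2/(1+u3*G^y2)) *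
     (if y0 = 0 then
       (if (y1, y2, y3) = (0, 1, 0) then u1/u2
        else if (y1, y2, y3) = (0, 1, 1) then u1/u3/G
        else if (y1, y2) = (1, 0) then -1
        else if (y1, y2, y3) = (1, 1, 0) then u3/u2 - 1
        else 0)
      else
       (if (y1, y2, y3) = (0, 1, 0) then u1/u2*G
        else if (y1, y2, y3) = (0, 1, 1) then u1/u3
        else if (y1, y2) = (1, 0) then -1
        else if (y1, y2, y3) = (1, 1, 0) then u3/u2 - 1
        else 0))) = 0
  \<and> (\<Sum>y1\<in>{0::nat,1}. \<Sum>y2\<in>{0::nat,1}. \<Sum>y3\<in>{0::nat,1}.
     (if y1 = 0 then 1/(1+u1*G^y0) else u1*G^y0/(1+u1*G^y0)) *
     (if y2 = 0 then 1/(1+u2*G^y1) else u2*G^y1/(1+u2*G^y1)) *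
     (if y3 = 0 then 1/(1+u3*G^y2) else u3*G^y2/(1+u3*G^y2)) *
     (if y0 = 0 then
       (if (y1, y2, y3) = (0, 0, 1) then u2/u3 - 1
        else if (y1, y2) = (0, 1) then -1
        else if (y1, y2, y3) = (1, 0, 0) then u3/u1
        else if (y1, y2, y3) = (1, 0, 1) then G*u2/u1
        else 0)
      else
       (if (y1, y2, y3) = (0, 0, 1) then u2/u3 - 1
        else if (y1, y2) = (0, 1) then -1
        else if (y1, y2, y3) = (1, 0, 0) then u3/u1/G
        else if (y1, y2, y3) = (1, 0, 1) then u2/u1
        else 0))) = 0"
proof -
  have a: "1 + u1 \<noteq> 0" "1+u2\<noteq>0" "1+u3\<noteq>0" "1+u1*G\<noteq>0" "1+u2*G\<noteq>0" "1+u3*G\<noteq>0"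
    "1+G*u1\<noteq>0" "1+G*u2\<noteq>0" "1+G*u3\<noteq>0" "u1 \<noteq> 0" "u2 \<noteq> 0" "u3 \<noteq> 0" "G \<noteq> 0"
    using assms by (auto simp: add_pos_pos add_eq_0_iff2 dest: add_pos_pos[of 1 "u1*G"]) (smt (verit) mult_pos_pos)+
  obtain d1 d2 d3 e1 e2 e3 where d: "1+u1 = d1" "1+u1*G = e1" "1+u2 = d2" "1+u3 = d3" "1+u2*G = e2" "1+u3*G = e3"
    by blast
  have dn: "d1 \<noteq> 0" "e1 \<noteq> 0" "d2 \<noteq> 0" "d3 \<noteq> 0" "e2 \<noteq> 0" "e3 \<noteq> 0" using a d by auto
  have du: "d1 = 1+u1" "e1 = 1+u1*G" "d2 = 1+u2" "d3 = 1+u3" "e2 = 1+u2*G" "e3 = 1+u3*G" using d by auto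
  from y0 have "y0 = 0 \<or> y0 = 1" by auto
  then show ?thesis
  proof
    assume h: "y0 = 0" show ?thesis unfolding h
      apply simp apply (simp only: d) apply (simp add: field_simps dn a(10-13))
      apply (simp only: du) apply (rule conjI; algebra) done
  next
    assume h: "y0 = 1" show ?thesis unfolding h
      apply simp apply (simp only: d) apply (simp add: field_simps dn a(10-13))
      apply (simp only: du) apply (rule conjI; algebra) done
  qed
qed

lemma lp: "yt \<in> {0,1} \<Longrightarrow> yp \<in> {0::nat,1} \<Longrightarrow>
  logit_prob (c + real yp * g + a) yt =
  (if yt = 0 then 1/(1+exp (c+a)*exp g^yp) else exp (c+a)*exp g^yp/(1+exp (c+a)*exp g^yp))"
  by (auto simp: lp0 lp1 exp_add algebra_simps)

lemma ex: "exp ((p - q) \<bullet> (b::real^'k)) = exp (p \<bullet> b + a) / exp (q \<bullet> b + a)"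
  by (simp add: inner_diff_left exp_diff[symmetric] algebra_simps)

theorem lemma1:
  fixes beta0 :: "real^'k" and gamma0 :: real and alpha :: real
    and x :: "nat \<Rightarrow> real^'k" and y0 :: nat
  assumes "y0 \<in> {0, 1}"
  shows "cond_exp (ma y0) beta0 gamma0 alpha x y0 = 0
       \<and> cond_exp (mb y0) beta0 gamma0 alpha x y0 = 0"
proof -
  define u1 where "u1 = exp (x 1 \<bullet> beta0 + alpha)"
  define u2 where "u2 = exp (x 2 \<bullet> beta0 + alpha)"
  define u3 where "u3 = exp (x 3 \<bullet> beta0 + alpha)"
  define G where "G = exp gamma0"
  have pos: "u1 > 0" "u2 > 0" "u3 > 0" "G > 0" by (auto simp: u1_def u2_def u3_def G_def)
  note K = key[OF pos assms]
  have e: "exp ((x i - x j) \<bullet> beta0) = exp (x i \<bullet> beta0 + alpha) / exp (x j \<bullet> beta0 + alpha)" for i j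
    by (rule ex)
  have pp: "path_prob beta0 gamma0 alpha x y0 y1 y2 y3 =
     (if y1 = 0 then 1/(1+u1*G^y0) else u1*G^y0/(1+u1*G^y0)) *
     (if y2 = 0 then 1/(1+u2*G^y1) else u2*G^y1/(1+u2*G^y1)) *
     (if y3 = 0 then 1/(1+u3*G^y2) else u3*G^y2/(1+u3*G^y2))"
    if "y1 \<in> {0,1}" "y2 \<in> {0,1}" "y3 \<in> {0,1}" for y1 y2 y3
    unfolding path_prob_def u1_def u2_def u3_def G_def
    using that assms by (simp add: lp)
  show ?thesis
    unfolding cond_exp_def using assms K
    apply (simp add: pp)
    apply (auto simp: ma_def mb_def m0a_def m0b_def m1a_def m1b_def e exp_diff exp_add u1_def u2_def u3_def G_def exp_minus)
    done
qed

end
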